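(* Let $0\le p_1<1/2<p_2\le 1$ and $c=\min\{1/2-p_1,\,p_2-1/2\}$. Let $\ell\ge 7$ be an integer with $\ell\ge (1/c^2)\ln(\ell+1)$. Then $|\mathbf{G}(\ell+1,[p_1\ell,p_2\ell])|\le 2^{\ell-3}$, and moreover there exists an injective map $\Psi:\mathbf{G}(\ell+1,[p_1\ell,p_2\ell])\to \mathcal{W}(\ell-2,\ell-2,[p_1(\ell-2),p_2(\ell-2)])$.
   Context: $\mathrm{wt}(\mathbf{x})$ denotes the number of ones of a binary sequence $\mathbf{x}$. $\mathbf{G}(\ell+1,[p_1\ell,p_2\ell])$ is the set of all $\mathbf{x}=x_1\dots x_{\ell+1}\in\{0,1\}^{\ell+1}$ such that at least one of the two windows $x_1\dots x_\ell$, $x_2\dots x_{\ell+1}$ has weight outside $[p_1\ell,p_2\ell]$. For reals $a\le b$ and $L\le n$, $\mathcal{W}(n,L,[a,b])$ is the set of $\mathbf{x}\in\{0,1\}^n$ all of whose length-$L$ windows $x_i\dots x_{i+L-1}$ have weight in $[a,b]$; thus $\mathcal{W}(\ell-2,\ell-2,[p_1(\ell-2),p_2(\ell-2)])$ is the set of sequences in $\{0,1\}^{\ell-2}$ with weight in $[p_1(\ell-2),p_2(\ell-2)]$. $\ln$ is the natural logarithm. *)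

theory Defs
  imports Complex_Main
begin

text \<open>Binary sequences are lists over bool (True = 1).\<close>

definition wt :: "bool list \<Rightarrow> nat" where
  "wt x = length (filter id x)"

text \<open>Sequences of length n all of whose length-L windows x_i..x_{i+L-1}
  (i = 1..n-L+1, here 0-based i = 0..n-L) have weight in [a,b].\<close>
definition W :: "nat \<Rightarrow> nat \<Rightarrow> real \<Rightarrow> real \<Rightarrow> bool list set" where
  "W n L a b = {x. length x = n \<and>
      (\<forall>i. i + L \<le> n \<longrightarrow> a \<le> real (wt (take L (drop i x))) \<and> real (wt (take L (drop i x))) \<le> b)}"

text \<open>G(l+1,[a,b]): sequences of length l+1 such that at least one of the two
  windows x_1..x_l, x_2..x_{l+1} has weight outside [a,b].\<close>
definition G :: "nat \<Rightarrow> real \<Rightarrow> real \<Rightarrow> bool list set" where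
  "G l a b = {x. length x = l + 1 \<and>
      (\<not> (a \<le> real (wt (take l x)) \<and> real (wt (take l x)) \<le> b) \<or>
       \<not> (a \<le> real (wt (drop 1 x)) \<and> real (wt (drop 1 x)) \<le> b))}"

end

theory Submission
  imports Defs "HOL-Probability.Probability"
begin

lemma card_wt_eq:
  "card {y::bool list. length y = n \<and> wt y = k} = n choose k"
proof -
  have "bij_betw (\<lambda>y. {i. i < length y \<and> y ! i}) {y::bool list. length y = n \<and> wt y = k}
          {S. S \<subseteq> {..<n} \<and> card S = k}"
  proof (rule bij_betw_byWitness[where f' = "\<lambda>S. map (\<lambda>i. i \<in> S) [0..<n]"])
    show "\<forall>a\<in>{y::bool list. length y = n \<and> wt y = k}.
       map (\<lambda>i. i \<in> {i. i < length a \<and> a ! i}) [0..<n] = a"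
      by (auto intro!: nth_equalityI)
    show "\<forall>a'\<in>{S. S \<subseteq> {..<n} \<and> card S = k}.
       {i. i < length (map (\<lambda>i. i \<in> a') [0..<n]) \<and> map (\<lambda>i. i \<in> a') [0..<n] ! i} = a'"
      by auto
    show "(\<lambda>y. {i. i < length y \<and> y ! i}) ` {y. length y = n \<and> wt y = k}
      \<subseteq> {S. S \<subseteq> {..<n} \<and> card S = k}"
      by (auto simp: wt_def length_filter_conv_card)
    show "(\<lambda>S. map (\<lambda>i. i \<in> S) [0..<n]) ` {S. S \<subseteq> {..<n} \<and> card S = k}
      \<subseteq> {y. length y = n \<and> wt y = k}"
    proof
      fix y assume "y \<in> (\<lambda>S. map (\<lambda>i. i \<in> S) [0..<n]) ` {S. S \<subseteq> {..<n} \<and> card S = k}"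
      then obtain S where S: "S \<subseteq> {..<n}" "card S = k" "y = map (\<lambda>i. i \<in> S) [0..<n]" by auto
      have "{i. i < n \<and> map (\<lambda>i. i \<in> S) [0..<n] ! i} = S" using S by auto
      then show "y \<in> {y. length y = n \<and> wt y = k}"
        using S by (simp add: wt_def length_filter_conv_card)
    qed
  qed
  then show ?thesis by (simp add: bij_betw_same_card n_subsets)
qed

lemma finite_len: "finite {y::bool list. length y = n \<and> P y}"
proof -
  have "finite {y::bool list. set y \<subseteq> UNIV \<and> length y = n}"
    by (rule finite_lists_length_eq) simp
  then show ?thesis by (rule rev_finite_subset) auto
qed

lemma card_len: "card {y::bool list. length y = n} = 2 ^ n"
  using card_lists_length_eq[of "UNIV::bool set" n] by simp

lemma card_wt_P:
  "real (card {y::bool list. length y = n \<and> P (wt y)}) = (\<Sum>k\<in>{k. k \<le> n \<and> P k}. real (n choose k))"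
proof -
  let ?A = "{y::bool list. length y = n \<and> P (wt y)}"
  have wtle: "wt y \<le> length y" for y by (simp add: wt_def)
  have "real (card ?A) = (\<Sum>y\<in>?A. 1)" by simp
  also have "\<dots> = (\<Sum>k\<in>{k. k \<le> n \<and> P k}. \<Sum>y\<in>{y\<in>?A. wt y = k}. 1)"
    by (rule sum.group[symmetric]) (use wtle in \<open>auto simp: finite_len\<close>)
  also have "\<dots> = (\<Sum>k\<in>{k. k \<le> n \<and> P k}. real (n choose k))"
  proof (rule sum.cong)
    fix k assume "k \<in> {k. k \<le> n \<and> P k}"
    then have "{y\<in>?A. wt y = k} = {y. length y = n \<and> wt y = k}" by auto
    then show "(\<Sum>y\<in>{y\<in>?A. wt y = k}. 1) = real (n choose k)" by (simp add: card_wt_eq)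
  qed simp
  finally show ?thesis .
qed

lemma prob_binom_half:
  "measure_pmf.prob (binomial_pmf n (1/2)) {x. P x} = (\<Sum>k\<in>{k. k \<le> n \<and> P k}. real (n choose k)) / 2^n"
proof -
  have "measure_pmf.prob (binomial_pmf n (1/2)) {x. P x}
      = measure_pmf.prob (binomial_pmf n (1/2)) ({x. P x} \<inter> set_pmf (binomial_pmf n (1/2)))"
    by (rule measure_Int_set_pmf[symmetric])
  also have "{x. P x} \<inter> set_pmf (binomial_pmf n (1/2)) = {k. k \<le> n \<and> P k}"
    by (auto simp: set_pmf_binomial)
  also have "measure_pmf.prob (binomial_pmf n (1/2)) {k. k \<le> n \<and> P k}
     = (\<Sum>k\<in>{k. k \<le> n \<and> P k}. pmf (binomial_pmf n (1/2)) k)"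
    by (rule measure_measure_pmf_finite) auto
  also have "\<dots> = (\<Sum>k\<in>{k. k \<le> n \<and> P k}. real (n choose k) / 2^n)"
  proof (rule sum.cong)
    fix k assume "k \<in> {k. k \<le> n \<and> P k}"
    then have "(1/2::real) ^ k * (1 - 1/2) ^ (n - k) = 1 / 2^n"
      by (simp add: power_add[symmetric] power_one_over)
    then show "pmf (binomial_pmf n (1/2)) k = real (n choose k) / 2^n"
      by (simp add: pmf_binomial mult.assoc)
  qed simp
  finally show ?thesis by (simp add: sum_divide_distrib)
qed

lemma chernoff_count:
  assumes "n > 0" "t \<ge> 0"
  shows "real (card {y::bool list. length y = n \<and> t \<le> \<bar>real (wt y) - real n / 2\<bar>})
          \<le> 2^n * (2 * exp (- 2 * t^2 / real n))"
proof -
  have bd: "binomial_distribution (1/2)" by unfold_locales auto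
  have "measure_pmf.prob (binomial_pmf n (1/2)) {x. t \<le> \<bar>real x - real n * (1/2)\<bar>}
     \<le> 2 * exp (- 2 * t^2 / real n)"
    using binomial_distribution.prob_abs_ge[OF bd assms] by simp
  then have "(\<Sum>k\<in>{k. k \<le> n \<and> t \<le> \<bar>real k - real n / 2\<bar>}. real (n choose k)) / 2^n
     \<le> 2 * exp (- 2 * t^2 / real n)"
    by (simp add: prob_binom_half)
  moreover have "real (card {y::bool list. length y = n \<and> t \<le> \<bar>real (wt y) - real n / 2\<bar>})
     = (\<Sum>k\<in>{k. k \<le> n \<and> t \<le> \<bar>real k - real n / 2\<bar>}. real (n choose k))"
    by (rule card_wt_P)
  ultimately show ?thesis
    by (simp add: field_simps)
qed


lemma G_sub:
  "G l a b \<subseteq> (\<lambda>(y,bb). y @ [bb]) ` ({y. length y = l \<and> \<not> (a \<le> real (wt y) \<and> real (wt y) \<le> b)} \<times> UNIV)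
     \<union> (\<lambda>(bb,y). bb # y) ` (UNIV \<times> {y. length y = l \<and> \<not> (a \<le> real (wt y) \<and> real (wt y) \<le> b)})"
proof
  fix x assume x: "x \<in> G l a b"
  then have len: "length x = l + 1" by (simp add: G_def)
  show "x \<in> (\<lambda>(y,bb). y @ [bb]) ` ({y. length y = l \<and> \<not> (a \<le> real (wt y) \<and> real (wt y) \<le> b)} \<times> UNIV)
     \<union> (\<lambda>(bb,y). bb # y) ` (UNIV \<times> {y. length y = l \<and> \<not> (a \<le> real (wt y) \<and> real (wt y) \<le> b)})"
  proof (cases "\<not> (a \<le> real (wt (take l x)) \<and> real (wt (take l x)) \<le> b)")
    case True
    have "x = take l x @ [last x]"
      using len by (metis add_diff_cancel_right' butlast_conv_take append_butlast_last_id
          length_greater_0_conv zero_less_Suc Suc_eq_plus1)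
    then have "x = (\<lambda>(y,bb). y @ [bb]) (take l x, last x)" by simp
    moreover have "(take l x, last x) \<in> {y. length y = l \<and> \<not> (a \<le> real (wt y) \<and> real (wt y) \<le> b)} \<times> UNIV"
      using True len by simp
    ultimately show ?thesis by blast
  next
    case False
    then have bad: "\<not> (a \<le> real (wt (drop 1 x)) \<and> real (wt (drop 1 x)) \<le> b)" using x by (simp add: G_def)
    have "x = hd x # drop 1 x" using len by (cases x) auto
    then have "x = (\<lambda>(bb,y). bb # y) (hd x, drop 1 x)" by simp
    moreover have "(hd x, drop 1 x) \<in> UNIV \<times> {y. length y = l \<and> \<not> (a \<le> real (wt y) \<and> real (wt y) \<le> b)}"
      using bad len by simp
    ultimately show ?thesis by blast
  qed
qed

theorem theorem6:
  fixes p1 p2 c :: real and l :: nat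
  assumes "0 \<le> p1" "p1 < 1/2" "1/2 < p2" "p2 \<le> 1"
    and "c = min (1/2 - p1) (p2 - 1/2)"
    and "l \<ge> 7"
    and "real l \<ge> (1 / c^2) * ln (real l + 1)"
  shows "card (G l (p1 * real l) (p2 * real l)) \<le> 2 ^ (l - 3)
    \<and> (\<exists>\<Psi>. inj_on \<Psi> (G l (p1 * real l) (p2 * real l)) \<and>
          \<Psi> ` (G l (p1 * real l) (p2 * real l))
            \<subseteq> W (l - 2) (l - 2) (p1 * (real l - 2)) (p2 * (real l - 2)))"
proof -
  have c0: "c > 0" and c12: "c \<le> 1/2" and hp1: "p1 \<le> 1/2 - c" and hp2: "1/2 + c \<le> p2"
    using assms(1-5) by (auto simp: min_def)
  have hc: "c^2 * real l \<ge> ln (real l + 1)"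
    using assms(7) c0 by (simp add: field_simps)
  define Bad where "Bad n = {y::bool list. length y = n \<and> c * real n \<le> \<bar>real (wt y) - real n / 2\<bar>}" for n
  have badsub: "{y::bool list. length y = n \<and> \<not> (p1 * r \<le> real (wt y) \<and> real (wt y) \<le> p2 * r)} \<subseteq> Bad n"
    if "r = real n" for n r
  proof
    fix y assume "y \<in> {y::bool list. length y = n \<and> \<not> (p1 * r \<le> real (wt y) \<and> real (wt y) \<le> p2 * r)}"
    then have y: "length y = n" "real (wt y) < p1 * r \<or> real (wt y) > p2 * r" by auto
    have "real n \<ge> 0" by simp
    then have "p1 * r \<le> (1/2 - c) * real n" "(1/2 + c) * real n \<le> p2 * r"
      using hp1 hp2 that by (auto intro: mult_right_mono)
    then show "y \<in> Bad n" using y by (auto simp: Bad_def field_simps)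
  qed
  have Bbound: "real (card (Bad n)) \<le> 2^n * (2 * exp (- 2 * c^2 * real n))" if "n > 0" for n
  proof -
    have "real (card (Bad n)) \<le> 2^n * (2 * exp (- 2 * (c * real n)^2 / real n))"
      unfolding Bad_def by (rule chernoff_count) (use that c0 in auto)
    also have "- 2 * (c * real n)^2 / real n = - 2 * c^2 * real n" using that by (simp add: power2_eq_square)
    finally show ?thesis .
  qed
  have finB: "finite (Bad n)" for n unfolding Bad_def by (rule finite_len)
  let ?G = "G l (p1 * real l) (p2 * real l)"
  let ?BL = "{y::bool list. length y = l \<and> \<not> (p1 * real l \<le> real (wt y) \<and> real (wt y) \<le> p2 * real l)}"
  have finBL: "finite ?BL" by (rule finite_len)
  have cardBL: "card ?BL \<le> card (Bad l)" by (rule card_mono[OF finB badsub]) simp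
  have "card ?G \<le> card ((\<lambda>(y,bb). y @ [bb]) ` (?BL \<times> (UNIV::bool set))
     \<union> (\<lambda>(bb,y). bb # y) ` ((UNIV::bool set) \<times> ?BL))"
    by (rule card_mono[OF _ G_sub]) (use finBL in simp)
  also have "\<dots> \<le> card ((\<lambda>(y,bb). y @ [bb]) ` (?BL \<times> (UNIV::bool set)))
     + card ((\<lambda>(bb,y). bb # y) ` ((UNIV::bool set) \<times> ?BL))"
    by (rule card_Un_le)
  also have "\<dots> \<le> card (?BL \<times> (UNIV::bool set)) + card ((UNIV::bool set) \<times> ?BL)"
    by (intro add_mono card_image_le) (use finBL in simp_all)
  also have "\<dots> = 4 * card ?BL" by (simp add: card_cartesian_product)
  finally have cG: "card ?G \<le> 4 * card (Bad l)" using cardBL by linarith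
  have l0: "l > 0" using assms by simp
  have e1: "exp (- 2 * c^2 * real l) * (real l + 1)^2 \<le> 1"
  proof -
    have "exp (2 * ln (real l + 1)) = exp (ln (real l+1)) * exp (ln (real l + 1))"
      by (simp only: mult_2 exp_add)
    then have "(real l + 1)^2 = exp (2 * ln (real l + 1))"
      by (simp add: power2_eq_square)
    then have "exp (- 2 * c^2 * real l) * (real l + 1)^2 = exp (2 * ln (real l + 1) - 2 * c^2 * real l)"
      by (simp add: exp_diff exp_minus field_simps)
    also have "\<dots> \<le> 1" using hc by simp
    finally show ?thesis .
  qed
  have l64: "(real l + 1)^2 \<ge> 64"
  proof -
    have "real l + 1 \<ge> 8" using assms by simp
    then have "(real l + 1)^2 \<ge> 8^2" by (rule power_mono) simp
    then show ?thesis by simp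
  qed
  have pw: "(2::real)^l = 8 * 2^(l-3)"
  proof -
    have "l = (l - 3) + 3" using assms by simp
    then have "(2::real)^l = 2^(l-3) * 2^3" by (metis power_add)
    then show ?thesis by simp
  qed
  have "real (card ?G) \<le> 4 * (2^l * (2 * exp (- 2 * c^2 * real l)))"
    using cG Bbound[OF l0] by linarith
  also have "\<dots> = 64 * 2^(l-3) * exp (- 2 * c^2 * real l)" by (simp add: pw)
  also have "\<dots> \<le> 2^(l-3)"
  proof -
    have "exp (- 2 * c^2 * real l) * 64 \<le> exp (- 2 * c^2 * real l) * (real l + 1)^2"
      using l64 by (intro mult_left_mono) auto
    then have "64 * exp (- 2 * c^2 * real l) \<le> 1" using e1 by linarith
    then show ?thesis by (simp add: mult.commute mult.left_commute)
  qed
  finally have part1: "card ?G \<le> 2^(l-3)"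
    by (metis of_nat_le_iff of_nat_numeral of_nat_power)
  define m where "m = l - 2"
  have rm: "real m = real l - 2" using assms by (simp add: m_def)
  have m0: "m > 0" using assms by (simp add: m_def)
  let ?W = "W (l - 2) (l - 2) (p1 * (real l - 2)) (p2 * (real l - 2))"
  have Weq: "?W = {x. length x = m \<and> (p1 * real m \<le> real (wt x) \<and> real (wt x) \<le> p2 * real m)}"
  proof (rule set_eqI)
    fix x :: "bool list"
    have "(\<forall>i. i + m \<le> m \<longrightarrow> P (take m (drop i x))) \<longleftrightarrow> P (take m x)" for P
    proof
      assume "\<forall>i. i + m \<le> m \<longrightarrow> P (take m (drop i x))"
      then show "P (take m x)" by (metis add_0 drop_0 order_refl)
    next
      assume "P (take m x)"
      then show "\<forall>i. i + m \<le> m \<longrightarrow> P (take m (drop i x))" by simp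
    qed
    from this[of "\<lambda>z. p1 * real m \<le> real (wt z) \<and> real (wt z) \<le> p2 * real m"]
    show "x \<in> ?W \<longleftrightarrow> x \<in> {x. length x = m \<and> (p1 * real m \<le> real (wt x) \<and> real (wt x) \<le> p2 * real m)}"
      unfolding W_def m_def[symmetric] rm[symmetric] mem_Collect_eq
      by auto
  qed
  have finW: "finite ?W" unfolding Weq by (rule finite_len)
  have "{x::bool list. length x = m} \<subseteq> ?W \<union> Bad m"
    using badsub[of "real m" m] unfolding Weq by auto
  then have "card {x::bool list. length x = m} \<le> card (?W \<union> Bad m)"
    by (intro card_mono) (use finW finB in auto)
  also have "\<dots> \<le> card ?W + card (Bad m)" by (rule card_Un_le)
  finally have cW1: "real (2^m) \<le> real (card ?W) + real (card (Bad m))"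
    unfolding card_len by linarith
  have e2: "exp (- 2 * c^2 * real m) \<le> 1/4"
  proof -
    have "exp (1::real) \<le> 3" by (rule exp_le)
    then have el: "exp 1 \<le> real l + 1" using assms(6) by linarith
    have "ln (exp 1) \<le> ln (real l + 1)" using el by (subst ln_le_cancel_iff) auto
    then have ln1: "1 \<le> ln (real l + 1)" by simp
    have ln4: "ln 4 \<le> ln (real l + 1)" using assms(6) by (subst ln_le_cancel_iff) auto
    have "c^2 \<le> (1/2)^2" using c0 c12 by (intro power_mono) auto
    then have c4: "c^2 \<le> 1/4" by (simp add: power_divide)
    have "2 * c^2 * real m = 2 * (c^2 * real l) - 4 * c^2" unfolding rm by (simp add: algebra_simps)
    then have "2 * c^2 * real m \<ge> ln 4"
      using hc ln1 ln4 c4 by linarith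
    then have "exp (- 2 * c^2 * real m) \<le> exp (- ln 4)" by simp
    also have "\<dots> = 1/4" by (simp add: exp_minus)
    finally show ?thesis .
  qed
  have "real (card (Bad m)) \<le> 2^m * (2 * exp (- 2 * c^2 * real m))" by (rule Bbound[OF m0])
  also have "\<dots> \<le> 2^m * (2 * (1/4))" using e2 by (intro mult_left_mono) auto
  finally have "real (card ?W) \<ge> 2^m / 2" using cW1 by simp
  moreover have "(2::real)^m = 2 * 2^(l-3)"
  proof -
    have "m = (l - 3) + 1" using assms by (simp add: m_def)
    then show ?thesis by (simp add: power_add)
  qed
  ultimately have "real (card ?W) \<ge> 2^(l-3)" by simp
  then have "card ?W \<ge> 2^(l-3)"
    by (metis of_nat_le_iff of_nat_numeral of_nat_power)
  with part1 have "card ?G \<le> card ?W" by linarith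
  moreover have "finite ?G" by (rule rev_finite_subset[OF _ G_sub]) (use finBL in simp)
  ultimately obtain f where "f ` ?G \<subseteq> ?W" "inj_on f ?G" using card_le_inj finW by blast
  with part1 show ?thesis by blast
qed

end
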